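(* Let $G$, $\mathrm{b}$, $(w_{ij})$, $M^*$ and $(y^*,\lambda^* )$ be as in the context, and assume the LP relaxation (Primal LP) has no fractional solution. Then for any alternating path $P$ (with respect to $M^*$) in $G$ of length at least $2n$, there exists an edge $\{i,j\}\in P$ such that $|w_{ij}-y_i^*-y_j^*|>0$.
   Context: Let $G=(V,E)$ be a finite undirected simple graph, $V=\{1,\dots,n\}$, with real edge weights $w_{ij}$ and positive integers $b_i\le\deg_G(i)$; $N(i)$ is the neighbour set of $i$. A perfect $\mathrm{b}$-matching is a set of edges in which each vertex $i$ has degree exactly $b_i$; assume one exists. Primal LP: minimize $\sum_{\{i,j\}\in E}w_{ij}x_{ij}$ s.t. $\sum_{j\in N(i)}x_{ij}=b_i$ for all $i$, $0\le x_{ij}\le1$. Dual LP: maximize $\sum_ib_iy_i-\sum_{\{i,j\}\in E}\lambda_{ij}$ s.t. $w_{ij}+\lambda_{ij}\ge y_i+y_j$, $\lambda_{ij}\ge0$. "No fractional solution" means every optimal primal solution lies in $\{0,1\}^E$; then the minimum weight perfect $\mathrm{b}$-matching $M^*$ is unique. $(y^*,\lambda^* )$ is an optimal solution of the Dual LP. A walk $P=(i_1,i_2,\dots,i_k)$ in $G$ (consecutive vertices adjacent, length $k-1$) is an alternating path if (a) either all odd edges $\{i_1,i_2\},\{i_3,i_4\},\dots$ belong to $M^*$ and all even edges $\{i_2,i_3\},\{i_4,i_5\},\dots$ do not, or all odd edges do not belong to $M^*$ and all even edges do; and (b) $P$ may revisit vertices and edges but never repeats an edge immediately: $i_r\neq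 i_{r+1}$ and $i_r\neq i_{r+2}$ for $1\le r\le k-2$. *)

theory Defs
  imports Complex_Main
begin

definition simple_graph :: "nat \<Rightarrow> nat set set \<Rightarrow> bool" where
  "simple_graph n E \<longleftrightarrow> (\<forall>e\<in>E. \<exists>i j. e = {i, j} \<and> i \<noteq> j \<and> i \<in> {1..n} \<and> j \<in> {1..n})"

definition deg :: "nat set set \<Rightarrow> nat \<Rightarrow> nat" where
  "deg E i = card {e \<in> E. i \<in> e}"

definition perfect_b_matching :: "nat \<Rightarrow> nat set set \<Rightarrow> (nat \<Rightarrow> nat) \<Rightarrow> nat set set \<Rightarrow> bool" where
  "perfect_b_matching n E b M \<longleftrightarrow> M \<subseteq> E \<and> (\<forall>i\<in>{1..n}. card {e \<in> M. i \<in> e} = b i)"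

definition min_weight_perfect_b_matching ::
  "nat \<Rightarrow> nat set set \<Rightarrow> (nat set \<Rightarrow> real) \<Rightarrow> (nat \<Rightarrow> nat) \<Rightarrow> nat set set \<Rightarrow> bool" where
  "min_weight_perfect_b_matching n E w b M \<longleftrightarrow> perfect_b_matching n E b M \<and>
     (\<forall>M'. perfect_b_matching n E b M' \<longrightarrow> (\<Sum>e\<in>M. w e) \<le> (\<Sum>e\<in>M'. w e))"

definition primal_feasible :: "nat \<Rightarrow> nat set set \<Rightarrow> (nat \<Rightarrow> nat) \<Rightarrow> (nat set \<Rightarrow> real) \<Rightarrow> bool" where
  "primal_feasible n E b x \<longleftrightarrow> (\<forall>e\<in>E. 0 \<le> x e \<and> x e \<le> 1) \<and>
     (\<forall>i\<in>{1..n}. (\<Sum>e\<in>{e \<in> E. i \<in> e}. x e) = real (b i))"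

definition primal_optimal ::
  "nat \<Rightarrow> nat set set \<Rightarrow> (nat set \<Rightarrow> real) \<Rightarrow> (nat \<Rightarrow> nat) \<Rightarrow> (nat set \<Rightarrow> real) \<Rightarrow> bool" where
  "primal_optimal n E w b x \<longleftrightarrow> primal_feasible n E b x \<and>
     (\<forall>x'. primal_feasible n E b x' \<longrightarrow> (\<Sum>e\<in>E. w e * x e) \<le> (\<Sum>e\<in>E. w e * x' e))"

definition no_fractional_solution ::
  "nat \<Rightarrow> nat set set \<Rightarrow> (nat set \<Rightarrow> real) \<Rightarrow> (nat \<Rightarrow> nat) \<Rightarrow> bool" where
  "no_fractional_solution n E w b \<longleftrightarrow>
     (\<forall>x. primal_optimal n E w b x \<longrightarrow> (\<forall>e\<in>E. x e = 0 \<or> x e = 1))"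

definition dual_feasible ::
  "nat set set \<Rightarrow> (nat set \<Rightarrow> real) \<Rightarrow> (nat \<Rightarrow> real) \<Rightarrow> (nat set \<Rightarrow> real) \<Rightarrow> bool" where
  "dual_feasible E w y lam \<longleftrightarrow>
     (\<forall>i j. {i, j} \<in> E \<longrightarrow> w {i, j} + lam {i, j} \<ge> y i + y j) \<and> (\<forall>e\<in>E. lam e \<ge> 0)"

definition dual_obj ::
  "nat \<Rightarrow> nat set set \<Rightarrow> (nat \<Rightarrow> nat) \<Rightarrow> (nat \<Rightarrow> real) \<Rightarrow> (nat set \<Rightarrow> real) \<Rightarrow> real" where
  "dual_obj n E b y lam = (\<Sum>i\<in>{1..n}. real (b i) * y i) - (\<Sum>e\<in>E. lam e)"

definition dual_optimal ::
  "nat \<Rightarrow> nat set set \<Rightarrow> (nat set \<Rightarrow> real) \<Rightarrow> (nat \<Rightarrow> nat) \<Rightarrow> (nat \<Rightarrow> real) \<Rightarrow> (nat set \<Rightarrow> real) \<Rightarrow> bool" where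
  "dual_optimal n E w b y lam \<longleftrightarrow> dual_feasible E w y lam \<and>
     (\<forall>y' lam'. dual_feasible E w y' lam' \<longrightarrow> dual_obj n E b y' lam' \<le> dual_obj n E b y lam)"

text \<open>Alternating path: walk given as a vertex list P = [i_1,...,i_k] (length k-1 = length P - 1).
  List indices are 0-based, so edge r (0-based) is {P!r, P!(r+1)}; 1-based odd edges are r even.\<close>
definition alternating_path :: "nat set set \<Rightarrow> nat set set \<Rightarrow> nat list \<Rightarrow> bool" where
  "alternating_path E M P \<longleftrightarrow>
     (\<forall>r. r + 1 < length P \<longrightarrow> {P ! r, P ! (r + 1)} \<in> E) \<and>
     ((\<forall>r. r + 1 < length P \<longrightarrow> ({P ! r, P ! (r + 1)} \<in> M \<longleftrightarrow> even r)) \<or>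
      (\<forall>r. r + 1 < length P \<longrightarrow> ({P ! r, P ! (r + 1)} \<in> M \<longleftrightarrow> odd r))) \<and>
     (\<forall>r. r + 1 < length P \<longrightarrow> P ! r \<noteq> P ! (r + 1)) \<and>
     (\<forall>r. r + 2 < length P \<longrightarrow> P ! r \<noteq> P ! (r + 2))"

end

theory Submission
  imports Defs "HOL-Analysis.Analysis"
begin

lemma cont_sum_coord: "continuous_on UNIV (\<lambda>x::nat set \<Rightarrow> real. \<Sum>e\<in>A. c e * x e)"
  by (intro continuous_intros continuous_on_product_coordinates)

lemma lp_opt_exists:
  assumes fin: "finite E" and feas: "primal_feasible n E b x0"
  shows "\<exists>x. primal_optimal n E w b x"
proof -
  define B where "B = (\<lambda>e::nat set. if e \<in> E then {0..1::real} else {0})"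
  define C where "C = (\<Inter>i\<in>{1..n}. {x::nat set \<Rightarrow> real. (\<Sum>e\<in>{e \<in> E. i \<in> e}. 1 * x e) = real (b i)})"
  define S where "S = Pi UNIV B \<inter> C"
  have memS: "x \<in> S \<longleftrightarrow> (\<forall>e. x e \<in> B e) \<and> (\<forall>i\<in>{1..n}. (\<Sum>e\<in>{e \<in> E. i \<in> e}. x e) = real (b i))" for x
    unfolding S_def C_def by auto
  have "compactin (product_topology (\<lambda>i. euclidean) UNIV) (PiE UNIV B)"
    unfolding compactin_PiE by (auto simp: B_def)
  hence cB: "compact (Pi UNIV B)"
    by (simp add: euclidean_product_topology PiE_UNIV_domain)
  have "closed C" unfolding C_def
    by (intro closed_INT ballI closed_Collect_eq cont_sum_coord continuous_on_const)
  hence cS: "compact S" unfolding S_def using cB by blast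
  have trunc: "(\<lambda>e. if e \<in> E then x' e else 0) \<in> S" if f': "primal_feasible n E b x'" for x'
  proof -
    have "\<forall>e. (if e \<in> E then x' e else 0) \<in> B e"
      using f' unfolding B_def primal_feasible_def by simp
    moreover have "(\<Sum>e\<in>{e \<in> E. i \<in> e}. (if e \<in> E then x' e else 0)) = real (b i)" if "i \<in> {1..n}" for i
    proof -
      have "(\<Sum>e\<in>{e \<in> E. i \<in> e}. (if e \<in> E then x' e else 0)) = (\<Sum>e\<in>{e \<in> E. i \<in> e}. x' e)"
        by (rule sum.cong) auto
      thus ?thesis using f' that unfolding primal_feasible_def by simp
    qed
    ultimately show ?thesis unfolding memS by blast
  qed
  obtain x where xS: "x \<in> S" and xmin: "\<And>y. y \<in> S \<Longrightarrow> (\<Sum>e\<in>E. w e * x e) \<le> (\<Sum>e\<in>E. w e * y e)"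
    using continuous_attains_inf[OF cS _ continuous_on_subset[OF cont_sum_coord[of w E]]] trunc[OF feas] by blast
  have xf: "primal_feasible n E b x"
  proof -
    have "\<forall>e\<in>E. 0 \<le> x e \<and> x e \<le> 1"
    proof
      fix e assume "e \<in> E"
      have "x e \<in> B e" using xS unfolding memS by blast
      thus "0 \<le> x e \<and> x e \<le> 1" using \<open>e \<in> E\<close> unfolding B_def by simp
    qed
    thus ?thesis using xS unfolding memS primal_feasible_def by blast
  qed
  show ?thesis unfolding primal_optimal_def
  proof (intro exI[of _ x] conjI allI impI)
    show "primal_feasible n E b x" by (rule xf)
    fix x' assume f': "primal_feasible n E b x'"
    define z' where "z' = (\<lambda>e. if e \<in> E then x' e else 0)"
    have "z' \<in> S" unfolding z'_def by (rule trunc[OF f'])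
    hence "(\<Sum>e\<in>E. w e * x e) \<le> (\<Sum>e\<in>E. w e * z' e)" by (rule xmin)
    also have "\<dots> = (\<Sum>e\<in>E. w e * x' e)" by (rule sum.cong) (auto simp: z'_def)
    finally show "(\<Sum>e\<in>E. w e * x e) \<le> (\<Sum>e\<in>E. w e * x' e)" .
  qed
qed

lemma tele: "(\<Sum>t\<in>{r..<r+k}. (-1::real)^t * (f t + f (Suc t))) = (-1)^r * f r - (-1)^(r+k) * f (r+k)"
  by (induction k) (auto simp: algebra_simps)

lemma sum_ind_sub:
  assumes "A \<subseteq> E" "finite E" shows "(\<Sum>e\<in>E. w e * (if e \<in> A then 1 else 0)) = (\<Sum>e\<in>A. (w e::real))"
proof -
  have "(\<Sum>e\<in>E. w e * (if e \<in> A then 1 else 0)) = (\<Sum>e\<in>E. (if e \<in> A then w e else 0))"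
    by (rule sum.cong) auto
  also have "\<dots> = (\<Sum>e\<in>{e\<in>E. e \<in> A}. w e)" using assms(2) by (simp add: sum.inter_filter)
  also have "{e\<in>E. e \<in> A} = A" using assms by blast
  finally show ?thesis .
qed

lemma sum_ind_card: assumes "finite A" shows
  "(\<Sum>e\<in>A. (if e \<in> M then 1 else 0)) = real (card {e \<in> A. e \<in> M})"
  using assms by (simp add: sum.inter_filter[symmetric])

lemma walk_cycle:
  assumes "set P \<subseteq> {1..n}" "length P \<ge> 2*n+1"
  shows "\<exists>r s. r < s \<and> s < length P \<and> even r \<and> even s \<and> P!r = P!s"
proof (rule ccontr)
  assume H: "\<not> ?thesis"
  have "inj_on (\<lambda>k. P!(2*k)) {0..n}"
  proof (rule inj_onI)
    fix a c assume "a \<in> {0..n}" "c \<in> {0..n}" "P!(2*a) = P!(2*c)"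
    show "a = c"
    proof (rule ccontr)
      assume "a \<noteq> c"
      hence "a < c \<or> c < a" by arith
      moreover have "2*a < length P" "2*c < length P" using \<open>a \<in> {0..n}\<close> \<open>c \<in> {0..n}\<close> assms(2) by auto
      moreover have "even (2*a)" "even (2*c)" by auto
      ultimately show False using H \<open>P!(2*a) = P!(2*c)\<close> by (metis mult_less_mono2 zero_less_numeral)
    qed
  qed
  moreover have "(\<lambda>k. P!(2*k)) ` {0..n} \<subseteq> {1..n}"
  proof
    fix v assume "v \<in> (\<lambda>k. P!(2*k)) ` {0..n}"
    then obtain k where "k \<le> n" "v = P!(2*k)" by auto
    hence "v \<in> set P" using assms(2) by auto
    thus "v \<in> {1..n}" using assms(1) by blast
  qed
  ultimately have "card {0..n} \<le> card {1..n}" by (metis card_inj_on_le finite_atLeastAtMost)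
  thus False by simp
qed


lemma chi_opt:
  assumes fin: "finite E" and nf: "no_fractional_solution n E w b"
    and mw: "min_weight_perfect_b_matching n E w b M"
  shows "primal_optimal n E w b (\<lambda>e. if e \<in> M then 1 else 0)"
proof -
  have ME: "M \<subseteq> E" and degM: "\<forall>i\<in>{1..n}. card {e \<in> M. i \<in> e} = b i"
    using mw unfolding min_weight_perfect_b_matching_def perfect_b_matching_def by auto
  have chif: "primal_feasible n E b (\<lambda>e. if e \<in> M then 1 else 0)"
    unfolding primal_feasible_def
  proof (intro conjI ballI)
    fix i assume i: "i \<in> {1..n}"
    have "(\<Sum>e\<in>{e \<in> E. i \<in> e}. if e \<in> M then 1 else 0) = real (card {e \<in> {e \<in> E. i \<in> e}. e \<in> M})"
      using fin by (intro sum_ind_card) auto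
    also have "{e \<in> {e \<in> E. i \<in> e}. e \<in> M} = {e \<in> M. i \<in> e}" using ME by blast
    finally show "(\<Sum>e\<in>{e \<in> E. i \<in> e}. if e \<in> M then 1 else 0) = real (b i)" using degM i by simp
  qed auto
  obtain x0 where x0: "primal_optimal n E w b x0" using lp_opt_exists[OF fin chif] by blast
  have x01: "\<forall>e\<in>E. x0 e = 0 \<or> x0 e = 1" using nf x0 unfolding no_fractional_solution_def by blast
  define M0 where "M0 = {e \<in> E. x0 e = 1}"
  have x0eq: "x0 e = (if e \<in> M0 then 1 else 0)" if "e \<in> E" for e
    using x01 that unfolding M0_def by auto
  have pm0: "perfect_b_matching n E b M0" unfolding perfect_b_matching_def
  proof (intro conjI ballI)
    show "M0 \<subseteq> E" unfolding M0_def by blast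
    fix i assume i: "i \<in> {1..n}"
    have "real (b i) = (\<Sum>e\<in>{e \<in> E. i \<in> e}. x0 e)"
      using x0 i unfolding primal_optimal_def primal_feasible_def by simp
    also have "\<dots> = (\<Sum>e\<in>{e \<in> E. i \<in> e}. if e \<in> M0 then 1 else 0)"
      by (rule sum.cong) (auto simp: x0eq)
    also have "\<dots> = real (card {e \<in> {e \<in> E. i \<in> e}. e \<in> M0})"
      using fin by (intro sum_ind_card) auto
    also have "{e \<in> {e \<in> E. i \<in> e}. e \<in> M0} = {e \<in> M0. i \<in> e}" unfolding M0_def by blast
    finally show "card {e \<in> M0. i \<in> e} = b i" by simp
  qed
  have "(\<Sum>e\<in>E. w e * (if e \<in> M then 1 else 0)) = (\<Sum>e\<in>M. w e)"
    using ME fin by (rule sum_ind_sub)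
  also have "\<dots> \<le> (\<Sum>e\<in>M0. w e)" using mw pm0 unfolding min_weight_perfect_b_matching_def by blast
  also have "\<dots> = (\<Sum>e\<in>E. w e * (if e \<in> M0 then 1 else 0))"
    using fin by (intro sum_ind_sub[symmetric]) (auto simp: M0_def)
  also have "\<dots> = (\<Sum>e\<in>E. w e * x0 e)" by (rule sum.cong) (auto simp: x0eq)
  finally have le: "(\<Sum>e\<in>E. w e * (if e \<in> M then 1 else 0)) \<le> (\<Sum>e\<in>E. w e * x0 e)" .
  show ?thesis unfolding primal_optimal_def
  proof (intro conjI allI impI chif)
    fix x' assume "primal_feasible n E b x'"
    hence "(\<Sum>e\<in>E. w e * x0 e) \<le> (\<Sum>e\<in>E. w e * x' e)" using x0 unfolding primal_optimal_def by blast
    thus "(\<Sum>e\<in>E. w e * (if e \<in> M then 1 else 0)) \<le> (\<Sum>e\<in>E. w e * x' e)" using le by linarith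
  qed
qed


lemma swap_cnt:
  fixes ed :: "nat \<Rightarrow> nat set" and \<phi> :: "nat set \<Rightarrow> real"
  assumes "finite A"
  shows "(\<Sum>e\<in>A. \<phi> e * (\<Sum>t\<in>T. if ed t = e then 1 else 0)) = (\<Sum>t\<in>T. if ed t \<in> A then \<phi> (ed t) else 0)"
proof -
  have "(\<Sum>e\<in>A. \<phi> e * (\<Sum>t\<in>T. if ed t = e then 1 else 0)) = (\<Sum>e\<in>A. \<Sum>t\<in>T. if ed t = e then \<phi> e else 0)"
    by (simp add: sum_distrib_left if_distrib cong: if_cong)
  also have "\<dots> = (\<Sum>t\<in>T. \<Sum>e\<in>A. if ed t = e then \<phi> e else 0)" by (rule sum.swap)
  also have "\<dots> = (\<Sum>t\<in>T. if ed t \<in> A then \<phi> (ed t) else 0)"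
    using assms by (simp add: sum.delta)
  finally show ?thesis .
qed

theorem lemma2:
  fixes n :: nat and E :: "nat set set" and w :: "nat set \<Rightarrow> real" and b :: "nat \<Rightarrow> nat"
    and M :: "nat set set" and y :: "nat \<Rightarrow> real" and lam :: "nat set \<Rightarrow> real" and P :: "nat list"
  assumes "simple_graph n E"
    and "\<forall>i\<in>{1..n}. 0 < b i \<and> b i \<le> deg E i"
    and "\<exists>M'. perfect_b_matching n E b M'"
    and "no_fractional_solution n E w b"
    and "min_weight_perfect_b_matching n E w b M"
    and "dual_optimal n E w b y lam"
    and "alternating_path E M P"
    and "set P \<subseteq> {1..n}"
    and "length P \<ge> 2 * n + 1"
  shows "\<exists>r. r + 1 < length P \<and> \<bar>w {P ! r, P ! (r + 1)} - y (P ! r) - y (P ! (r + 1))\<bar> > 0"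
proof (rule ccontr)
  assume neg: "\<not> ?thesis"
  have tight: "w {P!t, P!(t+1)} = y (P!t) + y (P!(t+1))" if "t + 1 < length P" for t
  proof -
    have "\<not> (0 < \<bar>w {P ! t, P ! (t + 1)} - y (P ! t) - y (P ! (t + 1))\<bar>)" using that neg by blast
    thus ?thesis by linarith
  qed
  have "E \<subseteq> Pow {1..n}"
  proof
    fix e assume "e \<in> E"
    then obtain i j where "e = {i, j}" "i \<in> {1..n}" "j \<in> {1..n}"
      using assms(1) unfolding simple_graph_def by blast
    thus "e \<in> Pow {1..n}" by simp
  qed
  hence fin: "finite E" by (rule finite_subset) simp
  have opt: "primal_optimal n E w b (\<lambda>e. if e \<in> M then 1 else 0)"
    using chi_opt[OF fin assms(4) assms(5)] .
  obtain r s where rs: "r < s" "s < length P" "even r" "even s" "P!r = P!s"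
    using walk_cycle[OF assms(8) assms(9)] by blast
  define ed where "ed t = {P!t, P!(t+1)}" for t
  define sg where "sg e = (if e \<in> M then -1 else 1::real)" for e
  have edE: "ed t \<in> E" if "t + 1 < length P" for t
    using assms(7) that unfolding alternating_path_def ed_def by blast
  have neq: "P!t \<noteq> P!(t+1)" if "t + 1 < length P" for t
    using assms(7) that unfolding alternating_path_def by blast
  obtain c :: real where c: "\<And>t. t + 1 < length P \<Longrightarrow> sg (ed t) = c * (-1)^t"
  proof -
    consider "\<forall>t. t + 1 < length P \<longrightarrow> (ed t \<in> M \<longleftrightarrow> even t)"
      | "\<forall>t. t + 1 < length P \<longrightarrow> (ed t \<in> M \<longleftrightarrow> odd t)"
      using assms(7) unfolding alternating_path_def ed_def by blast
    thus ?thesis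
    proof cases
      case 1
      show ?thesis by (rule that[of "-1"]) (use 1 in \<open>auto simp: sg_def\<close>)
    next
      case 2
      show ?thesis by (rule that[of "1"]) (use 2 in \<open>auto simp: sg_def\<close>)
    qed
  qed
  have inr: "t + 1 < length P" if "t \<in> {r..<s}" for t using that rs by auto
  have telez: "(\<Sum>t\<in>{r..<s}. (-1::real)^t * (g (P!t) + g (P!(Suc t)))) = 0" for g :: "nat \<Rightarrow> real"
  proof -
    have "s = r + (s - r)" using rs by simp
    hence "(\<Sum>t\<in>{r..<s}. (-1::real)^t * (g (P!t) + g (P!(Suc t)))) = (-1)^r * g (P!r) - (-1)^s * g (P!s)"
      using tele[of "\<lambda>t. g (P!t)" r "s - r"] by metis
    thus ?thesis using rs by simp
  qed
  define cnt where "cnt e = (\<Sum>t\<in>{r..<s}. if ed t = e then 1 else (0::real))" for e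
  have cost0: "(\<Sum>e\<in>E. (w e * sg e) * cnt e) = 0"
  proof -
    have "(\<Sum>e\<in>E. (w e * sg e) * cnt e) = (\<Sum>t\<in>{r..<s}. if ed t \<in> E then w (ed t) * sg (ed t) else 0)"
      unfolding cnt_def by (rule swap_cnt[OF fin])
    also have "\<dots> = (\<Sum>t\<in>{r..<s}. c * ((-1)^t * (y (P!t) + y (P!(Suc t)))))"
    proof (rule sum.cong)
      fix t assume "t \<in> {r..<s}"
      hence t: "t + 1 < length P" by (rule inr)
      show "(if ed t \<in> E then w (ed t) * sg (ed t) else 0) = c * ((-1)^t * (y (P!t) + y (P!(Suc t))))"
        using edE[OF t] c[OF t] tight[OF t] unfolding ed_def by simp
    qed simp
    also have "\<dots> = 0" using telez[of y] by (simp add: sum_distrib_left[symmetric])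
    finally show ?thesis .
  qed
  have deg0: "(\<Sum>e\<in>{e \<in> E. i \<in> e}. sg e * cnt e) = 0" for i
  proof -
    define g where "g v = (if v = i then 1 else (0::real))" for v
    have "(\<Sum>e\<in>{e \<in> E. i \<in> e}. sg e * cnt e) = (\<Sum>t\<in>{r..<s}. if ed t \<in> {e \<in> E. i \<in> e} then sg (ed t) else 0)"
      unfolding cnt_def using fin by (intro swap_cnt) auto
    also have "\<dots> = (\<Sum>t\<in>{r..<s}. c * ((-1)^t * (g (P!t) + g (P!(Suc t)))))"
    proof (rule sum.cong)
      fix t assume "t \<in> {r..<s}"
      hence t: "t + 1 < length P" by (rule inr)
      show "(if ed t \<in> {e \<in> E. i \<in> e} then sg (ed t) else 0) = c * ((-1)^t * (g (P!t) + g (P!(Suc t))))"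
        using edE[OF t] c[OF t] neq[OF t] unfolding ed_def g_def by auto
    qed simp
    also have "\<dots> = 0" using telez[of g] by (simp add: sum_distrib_left[symmetric])
    finally show ?thesis .
  qed
  have cnt_nn: "0 \<le> cnt e" for e unfolding cnt_def by (rule sum_nonneg) simp
  have cnt_le: "cnt e \<le> real (s - r)" for e
  proof -
    have "cnt e \<le> real (card {r..<s}) * 1" unfolding cnt_def by (rule sum_bounded_above) simp
    thus ?thesis by simp
  qed
  have cnt_r: "1 \<le> cnt (ed r)"
  proof -
    have "(if ed r = ed r then 1 else (0::real)) \<le> cnt (ed r)" unfolding cnt_def
      by (rule member_le_sum[of r]) (use rs in auto)
    thus ?thesis by simp
  qed
  define \<epsilon> where "\<epsilon> = 1 / (2 * real (s - r))"
  have eps: "0 < \<epsilon>" "\<epsilon> * real (s - r) = 1/2" using rs unfolding \<epsilon>_def by auto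
  have ec: "0 \<le> \<epsilon> * cnt e" "\<epsilon> * cnt e \<le> 1/2" for e
  proof -
    show "0 \<le> \<epsilon> * cnt e" using eps cnt_nn by simp
    have "\<epsilon> * cnt e \<le> \<epsilon> * real (s - r)" by (rule mult_left_mono[OF cnt_le]) (use eps in simp)
    thus "\<epsilon> * cnt e \<le> 1/2" using eps(2) by linarith
  qed
  define x' where "x' e = (if e \<in> M then 1 else 0) + \<epsilon> * (sg e * cnt e)" for e
  have x'f: "primal_feasible n E b x'" unfolding primal_feasible_def
  proof (intro conjI ballI)
    fix e assume "e \<in> E"
    show "0 \<le> x' e" using ec[of e] unfolding x'_def sg_def by auto
    show "x' e \<le> 1" using ec[of e] unfolding x'_def sg_def by auto
  next
    fix i assume i: "i \<in> {1..n}"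
    have "(\<Sum>e\<in>{e \<in> E. i \<in> e}. x' e) = (\<Sum>e\<in>{e \<in> E. i \<in> e}. if e \<in> M then 1 else 0) + \<epsilon> * (\<Sum>e\<in>{e \<in> E. i \<in> e}. sg e * cnt e)"
      unfolding x'_def by (simp add: sum.distrib sum_distrib_left)
    also have "\<dots> = real (b i)" using deg0[of i] opt i unfolding primal_optimal_def primal_feasible_def by simp
    finally show "(\<Sum>e\<in>{e \<in> E. i \<in> e}. x' e) = real (b i)" .
  qed
  have "(\<Sum>e\<in>E. w e * x' e) = (\<Sum>e\<in>E. w e * (if e \<in> M then 1 else 0)) + \<epsilon> * (\<Sum>e\<in>E. (w e * sg e) * cnt e)"
    unfolding x'_def by (simp add: sum.distrib sum_distrib_left algebra_simps)
  hence costeq: "(\<Sum>e\<in>E. w e * x' e) = (\<Sum>e\<in>E. w e * (if e \<in> M then 1 else 0))" using cost0 by simp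
  have x'o: "primal_optimal n E w b x'" unfolding primal_optimal_def
  proof (intro conjI allI impI x'f)
    fix x'' assume "primal_feasible n E b x''"
    thus "(\<Sum>e\<in>E. w e * x' e) \<le> (\<Sum>e\<in>E. w e * x'' e)" using opt costeq unfolding primal_optimal_def by simp
  qed
  have "ed r \<in> E" using edE rs by simp
  hence "x' (ed r) = 0 \<or> x' (ed r) = 1" using assms(4) x'o unfolding no_fractional_solution_def by blast
  moreover have "0 < \<epsilon> * cnt (ed r)" using eps cnt_r by simp
  ultimately show False using ec[of "ed r"] unfolding x'_def sg_def by (auto split: if_splits)
qed

end
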